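(* For every integer $n\ge0$, with the operator acting on the variable $a$, \[ E(y/x,x;\theta)\{(-1)^nq^{\binom n2}a^n\}=U_n(x,y,a;q). \]
   Context: $q$ is a fixed complex number with $0<|q|<1$; $(a;q)_n=\prod_{i=0}^{n-1}(1-aq^i)$; ${n\brack k}=\frac{(q;q)_n}{(q;q)_k(q;q)_{n-k}}$. $P_n(x,y)=\prod_{i=0}^{n-1}(x-q^iy)$, $U_n(x,y,a;q)=\sum_{k=0}^n{n\brack k}(-1)^kq^{\binom k2}a^kP_{n-k}(x,y)$. For functions of $a$: $D_q\{f(a)\}=\frac{f(a)-f(aq)}{a}$, $\eta^{-1}\{f(a)\}=f(aq^{-1})$, $\theta=\eta^{-1}D_q$ (so $\theta\{f(a)\}=\frac{f(aq^{-1})-f(a)}{aq^{-1}}$), and the Cauchy companion operator is $E(\alpha,\beta;\theta)=\sum_{n=0}^\infty\frac{(\alpha;q)_n(-\beta\theta)^n}{(q;q)_n}$ (with $\theta^0$ the identity). *)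

theory Defs
  imports Complex_Main
begin

definition qpoch :: "complex \<Rightarrow> complex \<Rightarrow> nat \<Rightarrow> complex" where
  "qpoch a q n = (\<Prod>i<n. (1 - a * q ^ i))"

definition qbinom :: "complex \<Rightarrow> nat \<Rightarrow> nat \<Rightarrow> complex" where
  "qbinom q n k = qpoch q q n / (qpoch q q k * qpoch q q (n - k))"

definition Pn :: "complex \<Rightarrow> nat \<Rightarrow> complex \<Rightarrow> complex \<Rightarrow> complex" where
  "Pn q n x y = (\<Prod>i<n. (x - q ^ i * y))"

definition Uq :: "complex \<Rightarrow> nat \<Rightarrow> complex \<Rightarrow> complex \<Rightarrow> complex \<Rightarrow> complex" where
  "Uq q n x y a = (\<Sum>k=0..n. qbinom q n k * (-1) ^ k * q ^ (k choose 2) * a ^ k * Pn q (n - k) x y)"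

definition theta :: "complex \<Rightarrow> (complex \<Rightarrow> complex) \<Rightarrow> complex \<Rightarrow> complex" where
  "theta q f a = (f (a / q) - f a) / (a / q)"

text \<open>The summands of E(alpha,beta;theta){f}(a):
  (alpha;q)_m (-beta)^m / (q;q)_m * (theta^m f)(a).\<close>
definition E_term :: "complex \<Rightarrow> complex \<Rightarrow> complex \<Rightarrow> (complex \<Rightarrow> complex) \<Rightarrow> complex \<Rightarrow> nat \<Rightarrow> complex" where
  "E_term q \<alpha> \<beta> f a m = qpoch \<alpha> q m * (- \<beta>) ^ m / qpoch q q m * ((theta q ^^ m) f) a"

end

theory Submission
  imports Defs
begin

lemma qpoch_nz:
  assumes "0 < cmod q" "cmod q < 1"
  shows "qpoch q q k \<noteq> 0"
proof -
  have "1 - q * q ^ i \<noteq> 0" for i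
  proof
    assume "1 - q * q ^ i = 0"
    hence "q ^ Suc i = 1" by simp
    hence "cmod q ^ Suc i = 1" by (metis norm_one norm_power)
    moreover have "cmod q ^ Suc i < 1" using assms
      by (intro power_Suc_less_one) auto
    ultimately show False by simp
  qed
  thus ?thesis unfolding qpoch_def by (simp add: prod_zero_iff)
qed

lemma qpoch_Suc: "qpoch a q (Suc m) = qpoch a q m * (1 - a * q ^ m)"
  unfolding qpoch_def by simp

lemma theta_iter:
  fixes q :: complex and c :: complex
  assumes q0: "q \<noteq> 0" and mn: "m \<le> n"
  shows "\<forall>b. b \<noteq> 0 \<longrightarrow> (theta q ^^ m) (\<lambda>b. c * b ^ n) b
     = c * (\<Prod>j<m. (1 - q ^ (n - j)) / q ^ (n - 1 - j)) * b ^ (n - m)"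
  using mn
proof (induction m)
  case 0 then show ?case by simp
next
  case (Suc m)
  hence IH: "\<And>b. b \<noteq> 0 \<Longrightarrow> (theta q ^^ m) (\<lambda>b. c * b ^ n) b
     = c * (\<Prod>j<m. (1 - q ^ (n - j)) / q ^ (n - 1 - j)) * b ^ (n - m)" by auto
  define k where "k = n - Suc m"
  have nm: "n - m = Suc k" "n - 1 - m = k" using Suc.prems k_def by auto
  show ?case
  proof (intro allI impI)
    fix b :: complex assume b0: "b \<noteq> 0"
    define P where "P = c * (\<Prod>j<m. (1 - q ^ (n - j)) / q ^ (n - 1 - j))"
    have bq: "b / q \<noteq> 0" using b0 q0 by simp
    have "(theta q ^^ Suc m) (\<lambda>b. c * b ^ n) b
        = (P * (b/q) ^ Suc k - P * b ^ Suc k) / (b / q)"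
      by (simp add: theta_def IH[OF bq] IH[OF b0] P_def nm)
    also have "\<dots> = P * ((1 - q ^ Suc k) / q ^ k) * b ^ k"
      using b0 q0 by (simp add: field_simps power_divide)
    also have "\<dots> = c * (\<Prod>j<Suc m. (1 - q ^ (n - j)) / q ^ (n - 1 - j)) * b ^ (n - Suc m)"
      by (simp add: P_def nm k_def)
    finally show "(theta q ^^ Suc m) (\<lambda>b. c * b ^ n) b
        = c * (\<Prod>j<Suc m. (1 - q ^ (n - j)) / q ^ (n - 1 - j)) * b ^ (n - Suc m)" .
  qed
qed

lemma theta0: "f (b/q) = 0 \<Longrightarrow> f b = 0 \<Longrightarrow> theta q f b = 0"
  by (simp add: theta_def)

lemma theta_zero:
  fixes q :: complex
  assumes q0: "q \<noteq> 0"
  shows "\<forall>b. b \<noteq> 0 \<longrightarrow> (theta q ^^ (Suc n + j)) (\<lambda>b. c * b ^ n) b = 0"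
proof (induction j)
  case 0
  have h: "\<And>b. b \<noteq> 0 \<Longrightarrow> (theta q ^^ n) (\<lambda>b. c * b ^ n) b
     = c * (\<Prod>j<n. (1 - q ^ (n - j)) / q ^ (n - 1 - j))"
    using theta_iter[OF q0, of n n c] by simp
  show ?case
  proof (intro allI impI)
    fix b :: complex assume b0: "b \<noteq> 0"
    hence "b / q \<noteq> 0" using q0 by simp
    then show "(theta q ^^ (Suc n + 0)) (\<lambda>b. c * b ^ n) b = 0"
      using h[OF b0] h[of "b/q"] by (simp add: theta_def)
  qed
next
  case (Suc j)
  show ?case
  proof (intro allI impI)
    fix b :: complex assume b0: "b \<noteq> 0"
    hence "b / q \<noteq> 0" using q0 by simp
    then have "(theta q ^^ (Suc n + j)) (\<lambda>b. c * b ^ n) (b/q) = 0"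
      "(theta q ^^ (Suc n + j)) (\<lambda>b. c * b ^ n) b = 0" using Suc b0 by auto
    then have "theta q ((theta q ^^ (Suc n + j)) (\<lambda>b. c * b ^ n)) b = 0"
      by (rule theta0)
    then show "(theta q ^^ (Suc n + Suc j)) (\<lambda>b. c * b ^ n) b = 0"
      by (simp only: add_Suc_right funpow.simps(2) o_apply)
  qed
qed

lemma prod1:
  assumes "m \<le> n"
  shows "(\<Prod>j<m. (1 - q ^ (n - j))) * qpoch q q (n - m) = qpoch q q n"
  using assms
proof (induction m)
  case 0 then show ?case by simp
next
  case (Suc m)
  have e: "n - m = Suc (n - Suc m)" using Suc.prems by simp
  have "qpoch q q (n - m) = qpoch q q (n - Suc m) * (1 - q ^ (n - m))"
    by (subst e, subst qpoch_Suc) (simp add: e)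
  with Suc show ?case by (simp add: algebra_simps)
qed

lemma prod2:
  assumes "m \<le> n"
  shows "(\<Prod>j<m. (q::complex) ^ (n - 1 - j)) * q ^ ((n - m) choose 2) = q ^ (n choose 2)"
  using assms
proof (induction m)
  case 0 then show ?case by simp
next
  case (Suc m)
  have e: "n - m = Suc (n - Suc m)" using Suc.prems by simp
  have e2: "(n - m) choose 2 = ((n - Suc m) choose 2) + (n - Suc m)"
    by (subst e, simp add: numeral_2_eq_2)
  have "q ^ ((n - m) choose 2) = q ^ (((n - Suc m) choose 2) + (n - Suc m))"
    by (simp only: e2)
  hence "q ^ ((n - m) choose 2) = q ^ (n - 1 - m) * q ^ ((n - Suc m) choose 2)"
    by (simp only: power_add diff_Suc_eq_diff_pred) (simp add: mult.commute)
  with Suc show ?case by (simp add: algebra_simps)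
qed

lemma pn_eq:
  assumes "x \<noteq> 0"
  shows "qpoch (y / x) q m * x ^ m = Pn q m x y"
  unfolding qpoch_def Pn_def
  by (induction m) (use assms in \<open>auto simp: field_simps\<close>)

theorem mainTheorem8:
  fixes q x y a :: complex and n :: nat
  assumes "0 < cmod q" and "cmod q < 1"
    and "x \<noteq> 0" and "a \<noteq> 0"
  shows "(E_term q (y / x) x (\<lambda>b. (-1) ^ n * q ^ (n choose 2) * b ^ n) a)
           sums (Uq q n x y a)"
proof -
  have q0: "q \<noteq> 0" using assms by auto
  define c where "c = (-1::complex) ^ n * q ^ (n choose 2)"
  define T where "T = E_term q (y / x) x (\<lambda>b. c * b ^ n) a"
  have z: "T m = 0" if "m \<notin> {..n}" for m
  proof -
    have "m = Suc n + (m - Suc n)" using that by simp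
    then obtain j where "m = Suc n + j" by blast
    hence "(theta q ^^ m) (\<lambda>b. c * b ^ n) a = 0" using theta_zero[OF q0, of n j c] assms(4) by blast
    thus ?thesis by (simp only: T_def E_term_def mult_zero_right)
  qed
  have "T sums (sum T {..n})" by (rule sums_finite) (auto simp: z)
  moreover have "sum T {..n} = Uq q n x y a"
  proof -
    have "sum T {..n} = (\<Sum>m=0..n. T m)" by (simp add: atLeast0AtMost)
    also have "\<dots> = (\<Sum>k=0..n. T (n - k))"
      by (subst sum.atLeastAtMost_rev) simp
    also have "\<dots> = Uq q n x y a" unfolding Uq_def
    proof (rule sum.cong[OF refl])
      fix k assume "k \<in> {0..n}"
      hence kn: "k \<le> n" by simp
      define m where "m = n - k"
      have mn: "m \<le> n" and km: "n - m = k" using kn by (auto simp: m_def)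
      have p1: "(\<Prod>j<m. (1 - q ^ (n - j))) = qpoch q q n / qpoch q q k"
      proof -
        have "(\<Prod>j<m. (1 - q ^ (n - j))) * qpoch q q k = qpoch q q n"
          using prod1[OF mn, of q] unfolding km .
        thus ?thesis unfolding nonzero_eq_divide_eq[OF qpoch_nz[OF assms(1,2), of k]] .
      qed
      have p2: "(\<Prod>j<m. q ^ (n - 1 - j)) = q ^ (n choose 2) / q ^ (k choose 2)"
      proof -
        have "(\<Prod>j<m. q ^ (n - 1 - j)) * q ^ (k choose 2) = q ^ (n choose 2)"
          using prod2[OF mn, of q] unfolding km .
        thus ?thesis unfolding nonzero_eq_divide_eq[OF power_not_zero[OF q0]] .
      qed
      have pr: "(\<Prod>j<m. (1 - q ^ (n - j)) / q ^ (n - 1 - j))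
          = (qpoch q q n / qpoch q q k) / (q ^ (n choose 2) / q ^ (k choose 2))"
        unfolding prod_dividef p1 p2 by (rule refl)
      have th: "(theta q ^^ m) (\<lambda>b. c * b ^ n) a
          = c * ((qpoch q q n / qpoch q q k) / (q ^ (n choose 2) / q ^ (k choose 2))) * a ^ k"
      proof -
        have "(theta q ^^ m) (\<lambda>b. c * b ^ n) a
          = c * (\<Prod>j<m. (1 - q ^ (n - j)) / q ^ (n - 1 - j)) * a ^ (n - m)"
          using theta_iter[OF q0 mn, of c] assms(4) by blast
        thus ?thesis unfolding pr km .
      qed
      have sg: "(-1::complex) ^ m * (-1) ^ n = (-1) ^ k"
      proof -
        have "n = k + m" using kn m_def by simp
        hence "(-1::complex) ^ m * (-1) ^ n = (-1) ^ k * ((-1) ^ m * (-1) ^ m)"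
          by (simp only: power_add mult_ac)
        also have "\<dots> = (-1) ^ k" by (simp only: minus_one_mult_self mult_1_right)
        finally show ?thesis .
      qed
      have pm: "(- x) ^ m = (-1) ^ m * x ^ m" by (rule power_minus)
      have nz: "qpoch q q m \<noteq> 0" "qpoch q q k \<noteq> 0" "q ^ (n choose 2) \<noteq> 0" "q ^ (k choose 2) \<noteq> 0"
        using qpoch_nz[OF assms(1,2)] q0 by auto
      have "T (n - k) = qpoch (y / x) q m * x ^ m * ((-1) ^ m * (-1) ^ n)
          * (qpoch q q n / (qpoch q q k * qpoch q q m)) * q ^ (k choose 2) * a ^ k"
        unfolding T_def E_term_def m_def[symmetric] th unfolding c_def pm
        using nz assms(3) q0 by (simp add: field_simps)
      also have "\<dots> = qbinom q n k * (-1) ^ k * q ^ (k choose 2) * a ^ k * Pn q (n - k) x y"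
        unfolding pn_eq[OF assms(3)] sg qbinom_def m_def[symmetric] km by (simp add: algebra_simps)
      finally show "T (n - k) = qbinom q n k * (-1) ^ k * q ^ (k choose 2) * a ^ k * Pn q (n - k) x y" .
    qed
    finally show ?thesis .
  qed
  ultimately show ?thesis by (simp add: T_def c_def)
qed

end
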